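(* Let $n$ be a composite positive integer. Then there exists a normalized Latin square of size $n$ with entries in $\{1,\dots,n\}$ that is singular (its determinant as a real matrix is $0$).
   Context: A Latin square of size $n$ with entries in $\{1,\dots,n\}$ is an $n\times n$ matrix in which each of $1,\dots,n$ occurs exactly once in each row and each column; it is normalized if its first column is $(1,2,\dots,n)^T$. It is singular if it is not invertible as a real matrix. *)

theory Defs
  imports "Jordan_Normal_Form.Determinant"
begin

text \<open>An n x n matrix is represented by a function L :: nat => nat => nat,
  with rows/columns indexed by 0..n-1 (only values at i,j < n matter).\<close>

definition latin_square :: "nat \<Rightarrow> (nat \<Rightarrow> nat \<Rightarrow> nat) \<Rightarrow> bool" where
  "latin_square n L \<longleftrightarrow>
     (\<forall>i<n. (\<lambda>j. L i j) ` {..<n} = {1..n}) \<and>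
     (\<forall>j<n. (\<lambda>i. L i j) ` {..<n} = {1..n})"

definition normalized_latin_square :: "nat \<Rightarrow> (nat \<Rightarrow> nat \<Rightarrow> nat) \<Rightarrow> bool" where
  "normalized_latin_square n L \<longleftrightarrow> latin_square n L \<and> (\<forall>i<n. L i 0 = i + 1)"

definition real_matrix_of :: "nat \<Rightarrow> (nat \<Rightarrow> nat \<Rightarrow> nat) \<Rightarrow> real mat" where
  "real_matrix_of n L = mat n n (\<lambda>(i, j). real (L i j))"

definition singular :: "nat \<Rightarrow> (nat \<Rightarrow> nat \<Rightarrow> nat) \<Rightarrow> bool" where
  "singular n L \<longleftrightarrow> det (real_matrix_of n L) = 0"

end

theory Submission
  imports Defs "HOL-Number_Theory.Cong"
begin

lemma canc: "((x::nat) + u) mod m = (x + v) mod m \<Longrightarrow> u mod m = v mod m"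
  by (metis cong_add_lcancel_nat unique_euclidean_semiring_class.cong_def)

definition LL :: "nat \<Rightarrow> nat \<Rightarrow> nat \<Rightarrow> nat \<Rightarrow> nat" where
  "LL a b i j = ((i div b + j div b) mod a) * b + (i mod b + j mod b) mod b + 1"

lemma LL_sym: "LL a b i j = LL a b j i"
  unfolding LL_def by (simp add: add.commute)

lemma decomp:
  assumes "0 < (b::nat)" "Y < b" "Y' < b" "X*b+Y = X'*b+Y'"
  shows "X = X' \<and> Y = Y'"
proof -
  have "X = (X*b+Y) div b" using assms(1,2) by simp
  also have "\<dots> = (X'*b+Y') div b" using assms(4) by (simp only:)
  also have "\<dots> = X'" using assms(1,3) by simp
  finally have 1: "X = X'" .
  have "Y = (X*b+Y) mod b" using assms(1,2) by simp
  also have "\<dots> = (X'*b+Y') mod b" using assms(4) by (simp only:)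
  also have "\<dots> = Y'" using assms(1,3) by simp
  finally show ?thesis using 1 by simp
qed

lemma LL_row:
  assumes a: "a \<ge> 2" and b: "b \<ge> 2" and i: "i < a*b"
  shows "(\<lambda>j. LL a b i j) ` {..<a*b} = {1..a*b}"
proof -
  have bp: "b > 0" using b by auto
  have ap: "a > 0" using a by auto
  have inj: "inj_on (\<lambda>j. LL a b i j) {..<a*b}"
  proof (rule inj_onI)
    fix j j' assume j: "j \<in> {..<a*b}" and j': "j' \<in> {..<a*b}" and eq: "LL a b i j = LL a b i j'"
    have "(i div b + j div b) mod a = (i div b + j' div b) mod a \<and>
          (i mod b + j mod b) mod b = (i mod b + j' mod b) mod b"
      by (rule decomp[OF bp]) (use eq bp in \<open>auto simp: LL_def\<close>)
    then have e1: "(j div b) mod a = (j' div b) mod a" and e2: "(j mod b) mod b = (j' mod b) mod b"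
      using canc by blast+
    have "j div b < a" "j' div b < a" using j j' bp
      by (auto simp: less_mult_imp_div_less mult.commute)
    then have "j div b = j' div b" using e1 by simp
    moreover have "j mod b = j' mod b" using e2 by simp
    ultimately show "j = j'" by (metis div_mult_mod_eq)
  qed
  have sub: "(\<lambda>j. LL a b i j) ` {..<a*b} \<subseteq> {1..a*b}"
  proof
    fix k assume "k \<in> (\<lambda>j. LL a b i j) ` {..<a*b}"
    then obtain j where k: "k = LL a b i j" by auto
    let ?X = "(i div b + j div b) mod a" and ?Y = "(i mod b + j mod b) mod b"
    have "?X \<le> a - 1" "?Y \<le> b - 1" using ap bp
      by (auto simp: less_Suc_eq_le[symmetric])
    then have "?X * b + ?Y + 1 \<le> (a-1)*b + (b-1) + 1"
      by (meson add_le_mono le_refl mult_le_mono1)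
    also have "\<dots> = a*b" using ap bp by (simp add: algebra_simps)
    finally show "k \<in> {1..a*b}" using k unfolding LL_def by auto
  qed
  have "card ((\<lambda>j. LL a b i j) ` {..<a*b}) = card {1..a*b}"
    using card_image[OF inj] by simp
  then show ?thesis using card_subset_eq[OF _ sub] by simp
qed

theorem mainTheorem5:
  fixes n :: nat
  assumes "n > 1" and "\<not> prime n"
  shows "\<exists>L. normalized_latin_square n L \<and> singular n L"
proof -
  obtain a b where ab: "n = a*b" "a \<ge> 2" "b \<ge> 2"
  proof -
    obtain d where d: "d dvd n" "d \<noteq> 1" "d \<noteq> n"
      using assms prime_nat_iff by blast
    then obtain e where e: "n = d*e" by blast
    have "d \<noteq> 0" "e \<noteq> 0" using e assms by auto
    moreover have "e \<noteq> 1" using e d by auto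
    ultimately show ?thesis using that e d by force
  qed
  define L where "L = LL a b"
  have bp: "b > 0" using ab by auto
  have lat: "latin_square n L"
  proof -
    have r: "\<forall>i<n. (\<lambda>j. L i j) ` {..<n} = {1..n}"
      using LL_row[OF ab(2,3)] unfolding L_def ab(1) by blast
    have cc: "\<And>i j. L i j = L j i" unfolding L_def by (rule LL_sym)
    have "\<forall>j<n. (\<lambda>i. L i j) ` {..<n} = {1..n}"
    proof (intro allI impI)
      fix j assume "j < n"
      then show "(\<lambda>i. L i j) ` {..<n} = {1..n}" 
      proof -
        have "(\<lambda>i. L i j) ` {..<n} = (\<lambda>i. L j i) ` {..<n}"
          using image_cong[of "{..<n}" "{..<n}" "\<lambda>i. L i j" "\<lambda>i. L j i"] cc by blast
        then show ?thesis using r \<open>j < n\<close> by simp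
      qed
    qed
    then show ?thesis using r unfolding latin_square_def by blast
  qed
  have norm: "\<forall>i<n. L i 0 = i + 1"
  proof (intro allI impI)
    fix i assume i: "i < n"
    have "i div b < a" using i ab bp by (auto simp: less_mult_imp_div_less)
    then show "L i 0 = i + 1" unfolding L_def LL_def by simp
  qed
  define A where "A = real_matrix_of n L"
  have A: "A \<in> carrier_mat n n" unfolding A_def real_matrix_of_def by simp
  define v :: "real vec" where "v = vec n (\<lambda>j. if j = 0 then 1 else if j = 1 then -1
      else if j = b then -1 else if j = b+1 then 1 else 0)"
  have bn: "b + 1 < n"
  proof -
    have "2*b \<le> a*b" using ab by simp
    then show ?thesis using ab by linarith
  qed
  have v: "v \<in> carrier_vec n" unfolding v_def by simp
  have vnz: "v \<noteq> 0\<^sub>v n"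
  proof
    assume "v = 0\<^sub>v n"
    then have "v $ 0 = 0" using assms by simp
    then show False unfolding v_def using assms by simp
  qed
  have Av: "A *\<^sub>v v = 0\<^sub>v n"
  proof (rule eq_vecI)
    show "dim_vec (A *\<^sub>v v) = dim_vec (0\<^sub>v n)" using A by simp
    fix i assume i: "i < dim_vec (0\<^sub>v n)"
    then have i: "i < n" by simp
    let ?f = "\<lambda>j. real (L i j) * v $ j"
    have "(A *\<^sub>v v) $ i = (\<Sum>j<n. ?f j)"
      using i A unfolding A_def real_matrix_of_def mult_mat_vec_def scalar_prod_def
      by (auto simp: v_def lessThan_atLeast0 intro!: sum.cong)
    also have "\<dots> = (\<Sum>j\<in>{0,1,b,b+1}. ?f j)"
      by (rule sum.mono_neutral_right) (use bn in \<open>auto simp: v_def\<close>)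
    also have "\<dots> = real (L i 0) - real (L i 1) - real (L i b) + real (L i (b+1))"
      using ab bn by (simp add: v_def)
    also have "\<dots> = 0"
    proof -
      have g: "1 div b = 0" "1 mod b = 1" using ab by auto
      have g2: "(b+1) div b = 1 div b + 1" using ab div_add_self1[of b 1] by simp
      have g3: "(b+1) mod b = 1 mod b" by (rule mod_add_self1)
      have f: "(b+1) div b = 1" "(b+1) mod b = 1" "b div b = 1" "b mod b = 0"
        "1 div b = 0" "1 mod b = 1" using ab g g2 g3 by simp_all
      show ?thesis unfolding L_def LL_def f by simp
    qed
    finally show "(A *\<^sub>v v) $ i = 0\<^sub>v n $ i" using i by simp
  qed
  have "det A = 0" using det_0_iff_vec_prod_zero[OF A] v vnz Av by blast
  then show ?thesis using lat norm unfolding normalized_latin_square_def singular_def A_def by blast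
qed

end
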